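(* Let $p>1$, $1\le q<\infty$, $T>0$, $I=(0,T)$, $\overline{I}=[0,T]$, $X$ an $\mathbb{R}$-smooth Banach space, $Y$ a Banach space. For every $t\in\overline{I}$ let $\mathcal{D}(A(t))\subset\mathcal{D}(B(t))\subset X$ be subspaces, $A(t):\mathcal{D}(A(t))\to X$, $B(t):\mathcal{D}(B(t))\to Y$ (possibly nonlinear) operators, $\mathcal{M}(t):=\{y\in\mathcal{D}(A(t)):B(t)(y)=0\}$. Let $w\in C(\overline{I};X)\cap C^1(I;X)$ satisfy $\frac{dw}{dt}=A(t)(w)$ on $I$, $w(0)=w_0$, $w(t)\in\mathcal{M}(t)$ for $t\in I$. Let $w_\theta\in C(\overline{I};X)\cap C^1(I;X)$ with $w_\theta(t)\in\mathcal{D}(A(t))$, residuals $\mathcal{R}_{eq}=\frac{dw_\theta}{dt}-A(t)(w_\theta)$, $\mathcal{R}_{in}=w_\theta(0)-w_0$, $\mathcal{R}_{bn}=B(t)(w_\theta)$, and $\mathcal{E}:=\|w_\theta-w\|^q_{L^q(I;X)}$. Assume for every $t\in\overline{I}$ that $-A(t)$ is $(p,\psi(t))$-submonotone on $\mathcal{M}(t)$ with function $\Lambda(t,\cdot,\cdot)$, that $\psi(t)$ is subordinate to $B(t)$ on $\mathcal{M}(t)$ with function $\gamma(t,\cdot,\cdot)$ and a $t$-independent $\rho\in C(Y;\mathbb{R}^+)$, that $t\mapsto\gamma(t,w_\theta(t),w(t))\in C(\overline{I})$ and $t\mapsto\Lambda(t,w_\theta(t),w(t))\in L^1(I)$. Assume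 further: (i) there are sets $\mathcal{T}_{eq},\mathcal{T}_{in},\mathcal{T}_{bn}$, numbers $\alpha_{eq},\alpha_{in},\alpha_{bn}>0$ and, for each $M\in\mathbb{N}$, maps $\mathcal{Q}_{M,eq}:L^p(I;X)\times\mathcal{T}_{eq}^M\to\mathbb{R}$, $\mathcal{Q}_{M,in}:X\times\mathcal{T}_{in}^M\to\mathbb{R}$, $\mathcal{Q}_{M,bn}:L^p(I;Y)\times\mathcal{T}_{bn}^M\to\mathbb{R}$ such that for all $M$, all point tuples, all $v\in L^p(I;X)$, $y\in X$, $g\in L^p(I;Y)$: $|\|v\|^p_{L^p(I;X)}-\mathcal{Q}_{M,eq}(v,\cdot)|\le\beta^*_{eq}(v)M^{-\alpha_{eq}}$, $|\|y\|^p-\mathcal{Q}_{M,in}(y,\cdot)|\le\beta^*_{in}(y)M^{-\alpha_{in}}$, $|\|g\|^p_{L^p(I;Y)}-\mathcal{Q}_{M,bn}(g,\cdot)|\le\beta^*_{bn}(g)M^{-\alpha_{bn}}$ for some $\beta^*_{eq}(v),\beta^*_{in}(y),\beta^*_{bn}(g)\ge0$; (ii) training sets of sizes $M_{eq},M_{in},M_{bn}$ are given in $\mathcal{T}_{eq},\mathcal{T}_{in},\mathcal{T}_{bn}$ respectively, and the training errors are $\mathcal{E}_{T,eq}=\mathcal{Q}_{M_{eq},eq}(\mathcal{R}_{eq},\ldots)$, $\mathcal{E}_{T,in}=\mathcal{Q}_{M_{in},in}(\mathcal{R}_{in},\ldots)$, $\mathcal{E}_{T,bn}=\mathcal{Q}_{M_{bn},bn}(\mathcal{R}_{bn},\ldots)$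 evaluated on these sets (with $\mathcal{R}_{eq}\in L^p(I;X)$, $\mathcal{R}_{bn}\in L^p(I;Y)$); (iii) $\|\rho(g)\|_{L^1(I)}\le h(\|g\|_{L^p(I;Y)})$ for all $g\in L^p(I;Y)$, where $\rho(g)(t)=\rho(g(t))$ and $h:\mathbb{R}^+\to\mathbb{R}^+$ is nondecreasing with $h(\mu)\to0$ as $\mu\to0$. Then $$\mathcal{E}\le\tilde{\mathcal{C}}^{\frac{q}{p}}\left(\frac{p\left(e^{\frac{q(p-1)T}{p}}-1\right)}{q(p-1)}\right)e^{q\|\Lambda(\cdot,w_\theta(\cdot),w(\cdot))\|_{L^1(I)}},$$ where $$\tilde{\mathcal{C}}=\mathcal{E}_{T,eq}+\beta^*_{eq}(\mathcal{R}_{eq})M_{eq}^{-\alpha_{eq}}+\mathcal{E}_{T,in}+\beta^*_{in}(\mathcal{R}_{in})M_{in}^{-\alpha_{in}}+p\|\gamma(\cdot,w_\theta(\cdot),w(\cdot))\|_{C(\overline{I})}\,h\!\left(\left(\mathcal{E}_{T,bn}+\beta^*_{bn}(\mathcal{R}_{bn})M_{bn}^{-\alpha_{bn}}\right)^{\frac1p}\right).$$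
   Context: $X$ is $\mathbb{R}$-smooth if for all $y$ with $\|y\|=1$ and all $\chi$ the limit $D(\|\cdot\|)(y;\chi)=\lim_{\mathbb{R}\ni s\to0}\frac{\|y+s\chi\|-\|y\|}{s}$ exists (hence it exists for all $y\ne0$). Real $p$-form: $\langle y_1,y_2\rangle_p:=\|y_2\|^{p-1}D(\|\cdot\|)(y_2;y_1)$ for $y_2\neq0$, $\langle y_1,0\rangle_p:=0$. $-A$ is $(p,\psi)$-submonotone on a subspace $\mathcal{M}\subset\mathcal{D}(A)$ (with $\psi:\mathcal{D}(A)\times\mathcal{M}\to\mathbb{R}$) if $\langle A(\chi)-A(y),\chi-y\rangle_p\le\psi(\chi,y)+\Lambda(\chi,y)\|\chi-y\|^p$ for all $\chi\in\mathcal{D}(A)$, $y\in\mathcal{M}$, with some $\Lambda(\chi,y)\ge0$. $\psi$ is subordinate to $B:\mathcal{D}(B)\to Y$ on $\mathcal{M}$ if there exists $\rho\in C(Y;\mathbb{R}^+)$ with $\rho(\xi)\to0$ as $\xi\to0$ and $|\psi(\chi,y)|\le\gamma(\chi,y)\rho(B(\chi)-B(y))$ for all $\chi$ in the first domain of $\psi$ and $y\in\mathcal{M}$, with some $\gamma(\chi,y)\ge0$. *)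

theory Defs
  imports "HOL-Analysis.Analysis"
begin

definition R_smooth :: "'a::real_normed_vector itself \<Rightarrow> bool" where
  "R_smooth _ \<longleftrightarrow> (\<forall>(y::'a) z. norm y = 1 \<longrightarrow>
      (\<exists>L. ((\<lambda>s::real. (norm (y + s *\<^sub>R z) - norm y) / s) \<longlongrightarrow> L) (at 0)))"

definition Dnorm :: "'a::real_normed_vector \<Rightarrow> 'a \<Rightarrow> real" where
  "Dnorm y z = Lim (at (0::real)) (\<lambda>s. (norm (y + s *\<^sub>R z) - norm y) / s)"

definition pform :: "real \<Rightarrow> 'a::real_normed_vector \<Rightarrow> 'a \<Rightarrow> real" where
  "pform p y1 y2 = (if y2 = 0 then 0 else norm y2 powr (p - 1) * Dnorm y2 y1)"

definition neg_submonotone ::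
  "real \<Rightarrow> ('x::real_normed_vector \<Rightarrow> 'x) \<Rightarrow> 'x set \<Rightarrow> 'x set
     \<Rightarrow> ('x \<Rightarrow> 'x \<Rightarrow> real) \<Rightarrow> ('x \<Rightarrow> 'x \<Rightarrow> real) \<Rightarrow> bool" where
  "neg_submonotone p A DA M \<psi> \<Lambda> \<longleftrightarrow> M \<subseteq> DA \<and>
     (\<forall>z\<in>DA. \<forall>y\<in>M. \<Lambda> z y \<ge> 0 \<and>
        pform p (A z - A y) (z - y) \<le> \<psi> z y + \<Lambda> z y * norm (z - y) powr p)"

definition subordinate ::
  "('x \<Rightarrow> 'x \<Rightarrow> real) \<Rightarrow> ('x \<Rightarrow> 'y::real_normed_vector) \<Rightarrow> 'x set \<Rightarrow> 'x set
     \<Rightarrow> ('x \<Rightarrow> 'x \<Rightarrow> real) \<Rightarrow> ('y \<Rightarrow> real) \<Rightarrow> bool" where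
  "subordinate \<psi> B DA M \<gamma> \<rho> \<longleftrightarrow>
     continuous_on UNIV \<rho> \<and> (\<forall>\<xi>. \<rho> \<xi> \<ge> 0) \<and> (\<rho> \<longlongrightarrow> 0) (at 0) \<and>
     (\<forall>z\<in>DA. \<forall>y\<in>M. \<gamma> z y \<ge> 0 \<and> \<bar>\<psi> z y\<bar> \<le> \<gamma> z y * \<rho> (B z - B y))"

definition C1_on :: "real set \<Rightarrow> (real \<Rightarrow> 'a::real_normed_vector) \<Rightarrow> bool" where
  "C1_on S f \<longleftrightarrow> (\<exists>f'. (\<forall>t\<in>S. (f has_vector_derivative f' t) (at t)) \<and> continuous_on S f')"

definition Lp :: "real \<Rightarrow> real set \<Rightarrow> (real \<Rightarrow> 'a::real_normed_vector) set" where
  "Lp p I = {v. v \<in> borel_measurable (lebesgue_on I) \<and>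
                 integrable (lebesgue_on I) (\<lambda>t. norm (v t) powr p)}"

definition Lp_pow :: "real \<Rightarrow> real set \<Rightarrow> (real \<Rightarrow> 'a::real_normed_vector) \<Rightarrow> real" where
  "Lp_pow p I v = integral\<^sup>L (lebesgue_on I) (\<lambda>t. norm (v t) powr p)"

definition Lp_norm :: "real \<Rightarrow> real set \<Rightarrow> (real \<Rightarrow> 'a::real_normed_vector) \<Rightarrow> real" where
  "Lp_norm p I v = Lp_pow p I v powr (1 / p)"

end

theory Submission
  imports Defs
begin

lemma exp_aux:
  fixes x e :: real
  assumes "0 \<le> x" "x < e / (1 + e)" "0 < e"
  shows "x \<le> 1 - exp (- ((1 + e) * x))"
proof -
  define y where "y = (1 + e) * x"
  have y0: "0 \<le> y" using assms by (simp add: y_def)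
  have "1 + y \<le> exp y" by (rule exp_ge_add_one_self)
  hence "exp (- y) \<le> 1 / (1 + y)" using y0
    by (simp add: exp_minus field_simps)
  moreover have "x \<le> 1 - 1 / (1 + y)"
  proof -
    have "(1 + e) * x < e" using assms by (simp add: field_simps)
    hence "x * ((1+e)*x) \<le> x * e" using assms by (intro mult_left_mono) auto
    hence "x * (1 + y) \<le> y" by (simp add: y_def algebra_simps)
    thus ?thesis using y0 by (simp add: field_simps)
  qed
  ultimately show ?thesis by (simp add: y_def)
qed

lemma gronwall_int:
  fixes \<phi> a :: "real \<Rightarrow> real"
  assumes t0: "0 \<le> t0" and c\<phi>: "continuous_on {0..t0} \<phi>" and ai: "a integrable_on {0..t0}"
    and a0: "\<And>t. t \<in> {0..t0} \<Longrightarrow> 0 \<le> a t" and \<phi>0: "\<And>t. t \<in> {0..t0} \<Longrightarrow> 0 \<le> \<phi> t"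
    and K: "0 \<le> K"
    and a\<phi>i: "(\<lambda>s. a s * \<phi> s) integrable_on {0..t0}"
    and ineq: "\<And>t. t \<in> {0..t0} \<Longrightarrow> \<phi> t \<le> K + integral {0..t} (\<lambda>s. a s * \<phi> s)"
  shows "\<phi> t0 \<le> K * exp (integral {0..t0} a)"
proof -
  define A where "A t = integral {0..t} a" for t
  define u where "u t = K + integral {0..t} (\<lambda>s. a s * \<phi> s)" for t
  have cA: "continuous_on {0..t0} A" unfolding A_def by (rule indefinite_integral_continuous_1[OF ai])
  have cu: "continuous_on {0..t0} u" unfolding u_def
    by (intro continuous_intros indefinite_integral_continuous_1[OF a\<phi>i])
  have ai': "a integrable_on {c..d}" if "0 \<le> c" "d \<le> t0" for c d
    using integrable_on_subinterval[OF ai] that by auto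
  have a\<phi>i': "(\<lambda>s. a s * \<phi> s) integrable_on {c..d}" if "0 \<le> c" "d \<le> t0" for c d
    using integrable_on_subinterval[OF a\<phi>i] that by auto
  have umono: "u r \<le> u t" if "0 \<le> r" "r \<le> t" "t \<le> t0" for r t
  proof -
    have "integral {0..r} (\<lambda>s. a s * \<phi> s) \<le> integral {0..t} (\<lambda>s. a s * \<phi> s)"
      by (rule integral_subset_le) (use that a\<phi>i' a0 \<phi>0 in auto)
    thus ?thesis by (simp add: u_def)
  qed
  have main: "\<phi> t0 \<le> (K + e) * exp ((1 + e) * A t0)" if e: "0 < e" for e
  proof -
    define v where "v t = (K + e) * exp ((1 + e) * A t)" for t
    have cv: "continuous_on {0..t0} v" unfolding v_def by (intro continuous_intros cA)
    have vpos: "0 < v t" for t using K e by (simp add: v_def)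
    have "\<forall>t\<in>{0..t0}. u t < v t"
    proof (rule ccontr)
      assume "\<not> (\<forall>t\<in>{0..t0}. u t < v t)"
      define S where "S = {0..t0} \<inter> (\<lambda>t. u t - v t) -` {0..}"
      have Sne: "S \<noteq> {}" using \<open>\<not> (\<forall>t\<in>{0..t0}. u t < v t)\<close> by (auto simp: S_def)
      have Scl: "closed S" unfolding S_def
        by (rule continuous_closed_preimage) (auto intro: continuous_intros cu cv)
      have Sbdd: "bdd_below S" by (auto simp: S_def bdd_below_def)
      define \<tau> where "\<tau> = Inf S"
      have \<tau>S: "\<tau> \<in> S" unfolding \<tau>_def by (rule closed_contains_Inf[OF Sne Sbdd Scl])
      hence \<tau>r: "0 \<le> \<tau>" "\<tau> \<le> t0" "v \<tau> \<le> u \<tau>" by (auto simp: S_def)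
      have below: "u s < v s" if "0 \<le> s" "s < \<tau>" for s
      proof (rule ccontr)
        assume "\<not> u s < v s"
        hence "s \<in> S" using that \<tau>r by (auto simp: S_def)
        hence "\<tau> \<le> s" unfolding \<tau>_def using Sbdd by (rule cInf_lower)
        thus False using that by simp
      qed
      have u0: "u 0 = K" by (simp add: u_def)
      have v0: "v 0 = K + e" by (simp add: v_def A_def)
      have \<tau>pos: "0 < \<tau>"
      proof (rule ccontr)
        assume "\<not> 0 < \<tau>" hence "\<tau> = 0" using \<tau>r by simp
        thus False using \<tau>r u0 v0 e by simp
      qed
      have ueq: "u \<tau> \<le> v \<tau>"
      proof (rule ccontr)
        assume "\<not> u \<tau> \<le> v \<tau>"
        hence d0: "0 < u \<tau> - v \<tau>" by simp
        have "continuous_on {0..t0} (\<lambda>t. u t - v t)" by (intro continuous_intros cu cv)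
        then obtain d where d: "0 < d" "\<And>s. s \<in> {0..t0} \<Longrightarrow> dist s \<tau> < d \<Longrightarrow>
             dist (u s - v s) (u \<tau> - v \<tau>) < u \<tau> - v \<tau>"
          using \<tau>r d0 unfolding continuous_on_iff by (metis atLeastAtMost_iff)
        define s where "s = max 0 (\<tau> - d/2)"
        have s: "0 \<le> s" "s < \<tau>" "s \<in> {0..t0}" "dist s \<tau> < d"
          using \<tau>pos d \<tau>r by (auto simp: s_def dist_real_def)
        have "dist (u s - v s) (u \<tau> - v \<tau>) < u \<tau> - v \<tau>" using d(2) s by auto
        hence "0 < u s - v s" by (simp add: dist_real_def abs_less_iff)
        thus False using below[OF s(1,2)] by simp
      qed
      hence uv: "u \<tau> = v \<tau>" using \<tau>r by simp
      have ee: "0 < e / (1 + e)" using e by simp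
      obtain d where d: "0 < d" "\<And>s. s \<in> {0..t0} \<Longrightarrow> dist s \<tau> < d \<Longrightarrow>
             dist (A s) (A \<tau>) < e / (1 + e)"
        using cA \<tau>r ee unfolding continuous_on_iff by (metis atLeastAtMost_iff)
      define s where "s = max 0 (\<tau> - d/2)"
      have s: "0 \<le> s" "s < \<tau>" "s \<in> {0..t0}" "dist s \<tau> < d"
        using \<tau>pos d \<tau>r by (auto simp: s_def dist_real_def)
      define x where "x = integral {s..\<tau>} a"
      have Acomb: "A \<tau> = A s + x"
      proof -
        have "integral {0..s} a + integral {s..\<tau>} a = integral {0..\<tau>} a"
          by (rule Henstock_Kurzweil_Integration.integral_combine) (use s \<tau>r ai'[of 0 \<tau>] in auto)
        thus ?thesis unfolding A_def x_def by simp
      qed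
      have x0: "0 \<le> x" unfolding x_def
        by (rule integral_nonneg) (use ai' s \<tau>r a0 in auto)
      have xs: "x < e / (1 + e)" using d(2)[OF s(3,4)] Acomb x0 by (simp add: dist_real_def)
      have ucomb: "u \<tau> = u s + integral {s..\<tau>} (\<lambda>r. a r * \<phi> r)"
      proof -
        have "integral {0..s} (\<lambda>r. a r * \<phi> r) + integral {s..\<tau>} (\<lambda>r. a r * \<phi> r) = integral {0..\<tau>} (\<lambda>r. a r * \<phi> r)"
          by (rule Henstock_Kurzweil_Integration.integral_combine) (use s \<tau>r a\<phi>i'[of 0 \<tau>] in auto)
        thus ?thesis unfolding u_def by simp
      qed
      have "integral {s..\<tau>} (\<lambda>r. a r * \<phi> r) \<le> integral {s..\<tau>} (\<lambda>r. a r * u \<tau>)"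
      proof (rule integral_le)
        show "(\<lambda>r. a r * \<phi> r) integrable_on {s..\<tau>}" using a\<phi>i' s \<tau>r by auto
        show "(\<lambda>r. a r * u \<tau>) integrable_on {s..\<tau>}" using ai' s \<tau>r integrable_on_mult_left by blast
        fix r assume r: "r \<in> {s..\<tau>}"
        have "\<phi> r \<le> u r" using ineq[of r] r s \<tau>r by (simp add: u_def)
        also have "u r \<le> u \<tau>" using umono[of r \<tau>] r s \<tau>r by auto
        finally show "a r * \<phi> r \<le> a r * u \<tau>" using a0[of r] r s \<tau>r by (intro mult_left_mono) auto
      qed
      also have "\<dots> = x * u \<tau>" unfolding x_def by simp
      finally have "u \<tau> - u s \<le> v \<tau> * x" using ucomb uv by (simp add: mult.commute)
      moreover have "v \<tau> - v s < u \<tau> - u s" using below[OF s(1,2)] uv by simp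
      moreover have "v s = v \<tau> * exp (- ((1 + e) * x))"
        by (simp add: v_def Acomb algebra_simps flip: exp_add)
      moreover have "v \<tau> * x \<le> v \<tau> * (1 - exp (- ((1 + e) * x)))"
        using exp_aux[OF x0 xs e] vpos[of \<tau>] by (intro mult_left_mono) auto
      ultimately show False by (simp add: algebra_simps)
    qed
    hence "u t0 < v t0" using t0 by auto
    moreover have "\<phi> t0 \<le> u t0" using ineq[of t0] t0 by (simp add: u_def)
    ultimately show ?thesis by (simp add: v_def)
  qed
  have lim: "((\<lambda>e. (K + e) * exp ((1 + e) * A t0)) \<longlongrightarrow> (K + 0) * exp ((1 + 0) * A t0)) (at_right 0)"
    by (intro tendsto_intros)
  have "\<phi> t0 \<le> (K + 0) * exp ((1 + 0) * A t0)"
    by (rule tendsto_lowerbound[OF lim]) (use main eventually_at_right_less[of "0::real"] in \<open>auto elim: eventually_mono\<close>)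
  thus ?thesis by (simp add: A_def)
qed

lemma Dnorm_tendsto:
  fixes y z :: "'a::real_normed_vector"
  assumes sm: "R_smooth TYPE('a)" and y: "y \<noteq> 0"
  shows "((\<lambda>s::real. (norm (y + s *\<^sub>R z) - norm y) / s) \<longlongrightarrow> Dnorm y z) (at 0)"
proof -
  define c where "c = norm y"
  have c: "0 < c" using y by (simp add: c_def)
  define u where "u = inverse c *\<^sub>R y"
  define z' where "z' = inverse c *\<^sub>R z"
  have nu: "norm u = 1" using c by (simp add: u_def c_def)
  obtain L where L: "((\<lambda>s::real. (norm (u + s *\<^sub>R z') - norm u) / s) \<longlongrightarrow> L) (at 0)"
    using sm nu unfolding R_smooth_def by blast
  have eq: "(norm (y + s *\<^sub>R z) - norm y) / s = c * ((norm (u + s *\<^sub>R z') - norm u) / s)" for s :: real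
  proof -
    have "y + s *\<^sub>R z = c *\<^sub>R (u + s *\<^sub>R z')" using c by (simp add: u_def z'_def algebra_simps)
    hence "norm (y + s *\<^sub>R z) = c * norm (u + s *\<^sub>R z')" using c by simp
    thus ?thesis using nu by (simp add: c_def algebra_simps)
  qed
  have lim: "((\<lambda>s::real. (norm (y + s *\<^sub>R z) - norm y) / s) \<longlongrightarrow> c * L) (at 0)"
    unfolding eq by (intro tendsto_intros L)
  hence "Dnorm y z = c * L" unfolding Dnorm_def by (intro tendsto_Lim) auto
  thus ?thesis using lim by simp
qed

lemma Dnorm_bound:
  fixes y z :: "'a::real_normed_vector"
  assumes sm: "R_smooth TYPE('a)" and y: "y \<noteq> 0"
  shows "\<bar>Dnorm y z\<bar> \<le> norm z"
proof (rule tendsto_upperbound)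
  show "((\<lambda>s::real. \<bar>(norm (y + s *\<^sub>R z) - norm y) / s\<bar>) \<longlongrightarrow> \<bar>Dnorm y z\<bar>) (at 0)"
    by (intro tendsto_intros Dnorm_tendsto[OF sm y])
  have "\<bar>(norm (y + s *\<^sub>R z) - norm y) / s\<bar> \<le> norm z" if "s \<noteq> 0" for s :: real
  proof -
    have "\<bar>norm (y + s *\<^sub>R z) - norm y\<bar> \<le> norm (s *\<^sub>R z)"
      by (metis add_diff_cancel_left' norm_triangle_ineq3)
    thus ?thesis using that by (simp add: abs_divide divide_le_eq mult.commute)
  qed
  thus "\<forall>\<^sub>F s in at (0::real). \<bar>(norm (y + s *\<^sub>R z) - norm y) / s\<bar> \<le> norm z"
    by (auto simp: eventually_at_filter)
qed auto

lemma Dnorm_add: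
  fixes y a b :: "'a::real_normed_vector"
  assumes sm: "R_smooth TYPE('a)" and y: "y \<noteq> 0"
  shows "Dnorm y (a + b) \<le> norm a + Dnorm y b"
proof (rule tendsto_le[of "at_right (0::real)"])
  show "((\<lambda>s::real. (norm (y + s *\<^sub>R (a + b)) - norm y) / s) \<longlongrightarrow> Dnorm y (a + b)) (at_right 0)"
    by (rule tendsto_mono[OF at_within_le_at Dnorm_tendsto[OF sm y]])
  show "((\<lambda>s::real. norm a + (norm (y + s *\<^sub>R b) - norm y) / s) \<longlongrightarrow> norm a + Dnorm y b) (at_right 0)"
    by (intro tendsto_intros tendsto_mono[OF at_within_le_at Dnorm_tendsto[OF sm y]])
  have "(norm (y + s *\<^sub>R (a + b)) - norm y) / s \<le> norm a + (norm (y + s *\<^sub>R b) - norm y) / s"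
    if "0 < s" for s :: real
  proof -
    have "norm (y + s *\<^sub>R (a + b)) \<le> norm (y + s *\<^sub>R b) + norm (s *\<^sub>R a)"
    proof -
      have "y + s *\<^sub>R (a + b) = (y + s *\<^sub>R b) + s *\<^sub>R a" by (simp add: algebra_simps)
      thus ?thesis using norm_triangle_ineq[of "y + s *\<^sub>R b" "s *\<^sub>R a"] by (simp add: add.assoc)
    qed
    hence "norm (y + s *\<^sub>R (a + b)) - norm y \<le> s * norm a + (norm (y + s *\<^sub>R b) - norm y)"
      using that by simp
    thus ?thesis using that by (simp add: field_simps)
  qed
  thus "\<forall>\<^sub>F s in at_right (0::real). (norm (y + s *\<^sub>R (a + b)) - norm y) / s \<le> norm a + (norm (y + s *\<^sub>R b) - norm y) / s"
    by (rule eventually_mono[OF eventually_at_right_less]) auto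
qed auto

lemma vd_remainder:
  fixes e :: "real \<Rightarrow> 'a::real_normed_vector"
  assumes ed: "(e has_vector_derivative D) (at t)"
  shows "((\<lambda>h. norm (e (t + h) - e t - h *\<^sub>R D) / \<bar>h\<bar>) \<longlongrightarrow> 0) (at 0)"
proof -
  have "((\<lambda>y. norm (e y - e t - (y - t) *\<^sub>R D) / norm (y - t)) \<longlongrightarrow> 0) (at t)"
    using ed unfolding has_vector_derivative_def has_derivative_iff_norm by blast
  hence "((\<lambda>h. norm (e (t + h) - e t - ((t + h) - t) *\<^sub>R D) / norm ((t + h) - t)) \<longlongrightarrow> 0) (at 0)"
    by (subst (asm) LIM_offset_zero_iff) auto
  thus ?thesis by simp
qed

lemma norm_deriv:
  fixes e :: "real \<Rightarrow> 'a::real_normed_vector"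
  assumes sm: "R_smooth TYPE('a)" and ed: "(e has_vector_derivative D) (at t)" and ne: "e t \<noteq> 0"
  shows "((\<lambda>r. norm (e r)) has_real_derivative Dnorm (e t) D) (at t)"
  unfolding DERIV_def
proof -
  define q1 where "q1 h = (norm (e (t + h)) - norm (e t)) / h" for h
  define q2 where "q2 h = (norm (e t + h *\<^sub>R D) - norm (e t)) / h" for h
  have "((\<lambda>h. q1 h - q2 h) \<longlongrightarrow> 0) (at 0)"
  proof (rule Lim_null_comparison[OF _ vd_remainder[OF ed]])
    have "norm (q1 h - q2 h) \<le> norm (e (t + h) - e t - h *\<^sub>R D) / \<bar>h\<bar>" if "h \<noteq> 0" for h
    proof -
      have "q1 h - q2 h = (norm (e (t + h)) - norm (e t + h *\<^sub>R D)) / h"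
        using that by (simp add: q1_def q2_def field_simps)
      moreover have "\<bar>norm (e (t + h)) - norm (e t + h *\<^sub>R D)\<bar> \<le> norm (e (t + h) - e t - h *\<^sub>R D)"
        using norm_triangle_ineq3[of "e (t + h)" "e t + h *\<^sub>R D"] by (simp add: algebra_simps)
      ultimately show ?thesis using that by (simp add: abs_divide divide_right_mono)
    qed
    thus "\<forall>\<^sub>F h in at 0. norm (q1 h - q2 h) \<le> norm (e (t + h) - e t - h *\<^sub>R D) / \<bar>h\<bar>"
      by (auto simp: eventually_at_filter)
  qed
  moreover have "(q2 \<longlongrightarrow> Dnorm (e t) D) (at 0)"
    unfolding q2_def by (rule Dnorm_tendsto[OF sm ne])
  ultimately have "((\<lambda>h. (q1 h - q2 h) + q2 h) \<longlongrightarrow> 0 + Dnorm (e t) D) (at 0)"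
    by (intro tendsto_intros)
  thus "((\<lambda>h. (norm (e (t + h)) - norm (e t)) / h) \<longlongrightarrow> Dnorm (e t) D) (at 0)"
    by (simp add: q1_def)
qed

lemma normp_deriv:
  fixes e :: "real \<Rightarrow> 'a::real_normed_vector"
  assumes sm: "R_smooth TYPE('a)" and ed: "(e has_vector_derivative D) (at t)" and p: "1 < p"
  shows "((\<lambda>r. norm (e r) powr p) has_real_derivative p * pform p D (e t)) (at t)"
proof (cases "e t = 0")
  case False
  have "((\<lambda>z. z powr p) \<circ> (\<lambda>r. norm (e r)) has_real_derivative
      (p * norm (e t) powr (p - 1)) * Dnorm (e t) D) (at t)"
    by (rule DERIV_chain[OF has_real_derivative_powr norm_deriv[OF sm ed False]]) (use False in simp)
  thus ?thesis using False by (simp add: pform_def o_def mult.assoc)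
next
  case True
  define C where "C = norm D + 1"
  have C: "0 < C" unfolding C_def using norm_ge_zero[of D] by linarith
  have "((\<lambda>h. (norm (e (t + h)) powr p - norm (e t) powr p) / h) \<longlongrightarrow> 0) (at 0)"
  proof (rule Lim_null_comparison)
    show "((\<lambda>h. C powr p * \<bar>h\<bar> powr (p - 1)) \<longlongrightarrow> 0) (at 0)"
    proof -
      have "((\<lambda>h::real. \<bar>h\<bar> powr (p - 1)) \<longlongrightarrow> 0) (at 0)"
        by (rule tendsto_zero_powrI) (use p in \<open>auto intro!: tendsto_eq_intros\<close>)
      hence "((\<lambda>h. C powr p * \<bar>h\<bar> powr (p - 1)) \<longlongrightarrow> C powr p * 0) (at 0)"
        by (intro tendsto_intros)
      thus ?thesis by simp
    qed
    have ev: "\<forall>\<^sub>F h in at 0. norm (e (t + h) - e t - h *\<^sub>R D) / \<bar>h\<bar> < 1"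
      using vd_remainder[OF ed] by (rule order_tendstoD) simp
    have "\<forall>\<^sub>F h in at 0. h \<noteq> 0" by (simp add: eventually_at_filter)
    with ev show "\<forall>\<^sub>F h in at 0. norm ((norm (e (t + h)) powr p - norm (e t) powr p) / h) \<le> C powr p * \<bar>h\<bar> powr (p - 1)"
    proof eventually_elim
      case (elim h)
      have hp: "0 < \<bar>h\<bar>" using elim by simp
      have "norm (e (t + h) - h *\<^sub>R D) < \<bar>h\<bar>" using elim True hp by (simp add: divide_less_eq)
      hence "norm (e (t + h)) \<le> \<bar>h\<bar> * C"
        using norm_triangle_ineq[of "e (t + h) - h *\<^sub>R D" "h *\<^sub>R D"] by (simp add: C_def algebra_simps)
      hence "norm (e (t + h)) powr p \<le> (\<bar>h\<bar> * C) powr p"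
        using p by (intro powr_mono2) auto
      also have "\<dots> = \<bar>h\<bar> powr (p - 1) * \<bar>h\<bar> * C powr p"
        using hp C by (simp add: powr_mult powr_diff)
      finally have "norm (e (t + h)) powr p / \<bar>h\<bar> \<le> C powr p * \<bar>h\<bar> powr (p - 1)"
        using hp by (simp add: divide_le_eq algebra_simps)
      thus ?case using True p by (simp add: abs_divide)
    qed
  qed
  thus ?thesis using True unfolding DERIV_def by (simp add: pform_def)
qed

lemma young_p:
  fixes p x r :: real
  assumes p: "1 < p" and x: "0 \<le> x" and r: "0 \<le> r"
  shows "p * (x powr (p - 1) * r) \<le> r powr p + (p - 1) * x powr p"
proof -
  have q: "1 < p / (p - 1)" using p by (simp add: field_simps)
  have s: "1 / p + 1 / (p / (p - 1)) = 1" using p by (simp add: field_simps)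
  have "r * x powr (p - 1) \<le> r powr p / p + (x powr (p - 1)) powr (p / (p - 1)) / (p / (p - 1))"
    by (rule Youngs_inequality[OF p q s r]) simp
  also have "(x powr (p - 1)) powr (p / (p - 1)) = x powr p"
    using p by (simp add: powr_powr)
  finally have "r * x powr (p - 1) \<le> r powr p / p + x powr p * (p - 1) / p"
    by simp
  hence "p * (r * x powr (p - 1)) \<le> p * (r powr p / p + x powr p * (p - 1) / p)"
    using p by (intro mult_left_mono) auto
  also have "p * (r powr p / p + x powr p * (p - 1) / p) = r powr p + (p - 1) * x powr p"
    using p by (simp add: field_simps)
  finally show ?thesis by (simp add: mult.commute)
qed

theorem corollary1:
  fixes p q T :: real
    and A :: "real \<Rightarrow> 'x::banach \<Rightarrow> 'x" and B :: "real \<Rightarrow> 'x \<Rightarrow> 'y::banach"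
    and DA DB :: "real \<Rightarrow> 'x set"
    and w w\<^sub>\<theta> :: "real \<Rightarrow> 'x" and w0 :: 'x
    and \<psi> \<Lambda> \<gamma> :: "real \<Rightarrow> 'x \<Rightarrow> 'x \<Rightarrow> real" and \<rho> :: "'y \<Rightarrow> real"
    and Teq :: "'a set" and Tin :: "'b set" and Tbn :: "'c set"
    and \<alpha>eq \<alpha>in \<alpha>bn :: real
    and Qeq :: "nat \<Rightarrow> (real \<Rightarrow> 'x) \<Rightarrow> 'a list \<Rightarrow> real"
    and Qin :: "nat \<Rightarrow> 'x \<Rightarrow> 'b list \<Rightarrow> real"
    and Qbn :: "nat \<Rightarrow> (real \<Rightarrow> 'y) \<Rightarrow> 'c list \<Rightarrow> real"
    and \<beta>eq :: "(real \<Rightarrow> 'x) \<Rightarrow> real" and \<beta>in :: "'x \<Rightarrow> real" and \<beta>bn :: "(real \<Rightarrow> 'y) \<Rightarrow> real"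
    and Meq Min Mbn :: nat
    and Seq :: "'a list" and Sin :: "'b list" and Sbn :: "'c list"
    and h :: "real \<Rightarrow> real"
  defines "I \<equiv> {0<..<T}"
    and "M \<equiv> (\<lambda>t. {y \<in> DA t. B t y = 0})"
    and "Req \<equiv> (\<lambda>t. vector_derivative w\<^sub>\<theta> (at t) - A t (w\<^sub>\<theta> t))"
    and "Rin \<equiv> w\<^sub>\<theta> 0 - w0"
    and "Rbn \<equiv> (\<lambda>t. B t (w\<^sub>\<theta> t))"
    and "\<E> \<equiv> Lp_pow q {0<..<T} (\<lambda>t. w\<^sub>\<theta> t - w t)"
    and "ETeq \<equiv> Qeq Meq (\<lambda>t. vector_derivative w\<^sub>\<theta> (at t) - A t (w\<^sub>\<theta> t)) Seq"
    and "ETin \<equiv> Qin Min (w\<^sub>\<theta> 0 - w0) Sin"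
    and "ETbn \<equiv> Qbn Mbn (\<lambda>t. B t (w\<^sub>\<theta> t)) Sbn"
  assumes p: "p > 1" and q: "1 \<le> q" and T: "T > 0"
    and smooth: "R_smooth TYPE('x)"
    and dom_sub: "\<And>t. t \<in> {0..T} \<Longrightarrow> subspace (DA t) \<and> subspace (DB t) \<and> DA t \<subseteq> DB t"
    and w_cont: "continuous_on {0..T} w" and w_C1: "C1_on I w"
    and w_eq: "\<And>t. t \<in> I \<Longrightarrow> (w has_vector_derivative A t (w t)) (at t)"
    and w_init: "w 0 = w0"
    and w_M: "\<And>t. t \<in> I \<Longrightarrow> w t \<in> M t"
    and wt_cont: "continuous_on {0..T} w\<^sub>\<theta>" and wt_C1: "C1_on I w\<^sub>\<theta>"
    and wt_dom: "\<And>t. t \<in> {0..T} \<Longrightarrow> w\<^sub>\<theta> t \<in> DA t"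
    and submono: "\<And>t. t \<in> {0..T} \<Longrightarrow>
        neg_submonotone p (A t) (DA t) (M t) (\<psi> t) (\<Lambda> t)"
    and subord: "\<And>t. t \<in> {0..T} \<Longrightarrow> subordinate (\<psi> t) (B t) (DA t) (M t) (\<gamma> t) \<rho>"
    and \<gamma>_cont: "continuous_on {0..T} (\<lambda>t. \<gamma> t (w\<^sub>\<theta> t) (w t))"
    and \<Lambda>_L1: "integrable (lebesgue_on I) (\<lambda>t. \<Lambda> t (w\<^sub>\<theta> t) (w t))"
    and \<alpha>: "\<alpha>eq > 0" "\<alpha>in > 0" "\<alpha>bn > 0"
    and \<beta>_nonneg: "\<And>v. \<beta>eq v \<ge> 0" "\<And>y. \<beta>in y \<ge> 0" "\<And>g. \<beta>bn g \<ge> 0"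
    and Qeq_err: "\<And>m zs v. m \<ge> 1 \<Longrightarrow> length zs = m \<Longrightarrow> set zs \<subseteq> Teq \<Longrightarrow> v \<in> Lp p I \<Longrightarrow>
        \<bar>Lp_pow p I v - Qeq m v zs\<bar> \<le> \<beta>eq v * real m powr (- \<alpha>eq)"
    and Qin_err: "\<And>m zs y. m \<ge> 1 \<Longrightarrow> length zs = m \<Longrightarrow> set zs \<subseteq> Tin \<Longrightarrow>
        \<bar>norm y powr p - Qin m y zs\<bar> \<le> \<beta>in y * real m powr (- \<alpha>in)"
    and Qbn_err: "\<And>m zs g. m \<ge> 1 \<Longrightarrow> length zs = m \<Longrightarrow> set zs \<subseteq> Tbn \<Longrightarrow> g \<in> Lp p I \<Longrightarrow>
        \<bar>Lp_pow p I g - Qbn m g zs\<bar> \<le> \<beta>bn g * real m powr (- \<alpha>bn)"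
    and train: "Meq \<ge> 1" "length Seq = Meq" "set Seq \<subseteq> Teq"
               "Min \<ge> 1" "length Sin = Min" "set Sin \<subseteq> Tin"
               "Mbn \<ge> 1" "length Sbn = Mbn" "set Sbn \<subseteq> Tbn"
    and Req_Lp: "Req \<in> Lp p I" and Rbn_Lp: "Rbn \<in> Lp p I"
    and h_mono: "mono_on {0..} h" and h_nonneg: "\<And>\<mu>. \<mu> \<ge> 0 \<Longrightarrow> h \<mu> \<ge> 0"
    and h_lim: "(h \<longlongrightarrow> 0) (at_right 0)"
    and \<rho>_h: "\<And>g. g \<in> Lp p I \<Longrightarrow>
        integrable (lebesgue_on I) (\<lambda>t. \<rho> (g t)) \<and>
        integral\<^sup>L (lebesgue_on I) (\<lambda>t. \<bar>\<rho> (g t)\<bar>) \<le> h (Lp_norm p I g)"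
  shows "\<E> \<le> (ETeq + \<beta>eq Req * real Meq powr (- \<alpha>eq) + ETin + \<beta>in Rin * real Min powr (- \<alpha>in)
            + p * (SUP t\<in>{0..T}. \<bar>\<gamma> t (w\<^sub>\<theta> t) (w t)\<bar>)
                * h ((ETbn + \<beta>bn Rbn * real Mbn powr (- \<alpha>bn)) powr (1 / p))) powr (q / p)
          * (p * (exp (q * (p - 1) * T / p) - 1) / (q * (p - 1)))
          * exp (q * integral\<^sup>L (lebesgue_on I) (\<lambda>t. \<bar>\<Lambda> t (w\<^sub>\<theta> t) (w t)\<bar>))"
proof -
  have Idef: "I = {0<..<T}" and Mdef: "M = (\<lambda>t. {y \<in> DA t. B t y = 0})"
    and Reqdef: "Req = (\<lambda>t. vector_derivative w\<^sub>\<theta> (at t) - A t (w\<^sub>\<theta> t))"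
    and Rindef: "Rin = w\<^sub>\<theta> 0 - w0" and Rbndef: "Rbn = (\<lambda>t. B t (w\<^sub>\<theta> t))"
    and Edef: "\<E> = Lp_pow q {0<..<T} (\<lambda>t. w\<^sub>\<theta> t - w t)"
    and ETeqdef: "ETeq = Qeq Meq Req Seq" and ETindef: "ETin = Qin Min Rin Sin"
    and ETbndef: "ETbn = Qbn Mbn Rbn Sbn"
    using assms(1-9) by simp_all
  have p0: "0 < p" using p by simp
  obtain f' where f': "\<And>t. t \<in> I \<Longrightarrow> (w\<^sub>\<theta> has_vector_derivative f' t) (at t)"
    using wt_C1 unfolding C1_on_def by blast
  define e where "e t = w\<^sub>\<theta> t - w t" for t
  define \<phi> where "\<phi> t = norm (e t) powr p" for t
  define Dt where "Dt t = f' t - A t (w t)" for t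
  have ed: "(e has_vector_derivative Dt t) (at t)" if "t \<in> I" for t
    unfolding e_def[abs_def] Dt_def using f'[OF that] w_eq[OF that]
    by (rule has_vector_derivative_diff)
  have Dsplit: "Dt t = Req t + (A t (w\<^sub>\<theta> t) - A t (w t))" if "t \<in> I" for t
    using vector_derivative_at[OF f'[OF that]] by (simp add: Reqdef Dt_def)
  define \<phi>' where "\<phi>' t = p * pform p (Dt t) (e t)" for t
  have \<phi>d: "(\<phi> has_real_derivative \<phi>' t) (at t)" if "t \<in> I" for t
    unfolding \<phi>_def[abs_def] \<phi>'_def by (rule normp_deriv[OF smooth ed[OF that] p])
  have \<phi>0: "0 \<le> \<phi> t" for t by (simp add: \<phi>_def)
  have econt: "continuous_on {0..T} e" unfolding e_def[abs_def] by (intro continuous_intros wt_cont w_cont)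
  have \<phi>cont: "continuous_on {0..T} \<phi>" unfolding \<phi>_def[abs_def]
    by (rule continuous_on_powr') (use p0 in \<open>auto intro!: continuous_intros econt\<close>)
  define \<Gamma> where "\<Gamma> = (SUP t\<in>{0..T}. \<bar>\<gamma> t (w\<^sub>\<theta> t) (w t)\<bar>)"
  have bdd\<Gamma>: "bdd_above ((\<lambda>t. \<bar>\<gamma> t (w\<^sub>\<theta> t) (w t)\<bar>) ` {0..T})"
  proof -
    have "continuous_on {0..T} (\<lambda>t. \<bar>\<gamma> t (w\<^sub>\<theta> t) (w t)\<bar>)" by (intro continuous_intros \<gamma>_cont)
    hence "compact ((\<lambda>t. \<bar>\<gamma> t (w\<^sub>\<theta> t) (w t)\<bar>) ` {0..T})" by (rule compact_continuous_image) simp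
    thus ?thesis by (intro bounded_imp_bdd_above compact_imp_bounded)
  qed
  have \<Gamma>ge: "\<bar>\<gamma> t (w\<^sub>\<theta> t) (w t)\<bar> \<le> \<Gamma>" if "t \<in> {0..T}" for t
    unfolding \<Gamma>_def by (rule cSUP_upper[OF that bdd\<Gamma>])
  have \<Gamma>0: "0 \<le> \<Gamma>" using \<Gamma>ge[of 0] T by force
  define Lam where "Lam t = \<bar>\<Lambda> t (w\<^sub>\<theta> t) (w t)\<bar>" for t
  define a where "a t = (p - 1) + p * Lam t" for t
  define r where "r t = norm (Req t) powr p" for t
  define rb where "rb t = \<bar>\<rho> (Rbn t)\<bar>" for t
  define b where "b t = r t + p * \<Gamma> * rb t" for t
  have a0: "0 \<le> a t" for t using p by (simp add: a_def Lam_def)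
  have b0: "0 \<le> b t" for t using p \<Gamma>0 by (simp add: b_def r_def rb_def)
  have bound: "\<phi>' t \<le> a t * \<phi> t + b t" if t: "t \<in> I" for t
  proof -
    have t': "t \<in> {0..T}" using t by (auto simp: Idef)
    have wM: "w t \<in> DA t" "B t (w t) = 0" using w_M[OF t] by (auto simp: Mdef)
    have wtD: "w\<^sub>\<theta> t \<in> DA t" by (rule wt_dom[OF t'])
    have wMM: "w t \<in> M t" by (rule w_M[OF t])
    from submono[OF t'] wtD wMM
    have \<Lambda>0: "0 \<le> \<Lambda> t (w\<^sub>\<theta> t) (w t)" and smo: "pform p (A t (w\<^sub>\<theta> t) - A t (w t)) (w\<^sub>\<theta> t - w t)
        \<le> \<psi> t (w\<^sub>\<theta> t) (w t) + \<Lambda> t (w\<^sub>\<theta> t) (w t) * norm (w\<^sub>\<theta> t - w t) powr p"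
      unfolding neg_submonotone_def by auto
    from subord[OF t'] wtD wMM
    have \<rho>0: "\<And>\<xi>. 0 \<le> \<rho> \<xi>" and \<psi>b: "\<bar>\<psi> t (w\<^sub>\<theta> t) (w t)\<bar> \<le> \<gamma> t (w\<^sub>\<theta> t) (w t) * \<rho> (B t (w\<^sub>\<theta> t) - B t (w t))"
      unfolding subordinate_def by auto
    have \<psi>le: "\<psi> t (w\<^sub>\<theta> t) (w t) \<le> \<Gamma> * rb t"
    proof -
      have "\<psi> t (w\<^sub>\<theta> t) (w t) \<le> \<gamma> t (w\<^sub>\<theta> t) (w t) * \<rho> (Rbn t)"
        using \<psi>b wM by (simp add: Rbndef)
      also have "\<dots> \<le> \<Gamma> * \<rho> (Rbn t)"
        using \<Gamma>ge[OF t'] \<rho>0[of "Rbn t"] by (intro mult_right_mono) auto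
      finally show ?thesis using \<rho>0[of "Rbn t"] by (simp add: rb_def)
    qed
    have rb0: "0 \<le> rb t" by (simp add: rb_def)
    show ?thesis
    proof (cases "e t = 0")
      case True
      hence "\<phi>' t = 0" by (simp add: \<phi>'_def pform_def)
      thus ?thesis using a0[of t] \<phi>0[of t] b0[of t] by simp
    next
      case False
      define N where "N = norm (e t)"
      have N: "0 < N" using False by (simp add: N_def)
      have "pform p (Dt t) (e t) = N powr (p - 1) * Dnorm (e t) (Dt t)"
        using False by (simp add: pform_def N_def)
      also have "Dnorm (e t) (Dt t) \<le> norm (Req t) + Dnorm (e t) (A t (w\<^sub>\<theta> t) - A t (w t))"
        unfolding Dsplit[OF t] by (rule Dnorm_add[OF smooth False])
      hence "N powr (p - 1) * Dnorm (e t) (Dt t) \<le> N powr (p - 1) * (norm (Req t) + Dnorm (e t) (A t (w\<^sub>\<theta> t) - A t (w t)))"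
        by (intro mult_left_mono) auto
      also have "\<dots> = N powr (p - 1) * norm (Req t) + pform p (A t (w\<^sub>\<theta> t) - A t (w t)) (e t)"
        using False by (simp add: pform_def N_def algebra_simps)
      also have "pform p (A t (w\<^sub>\<theta> t) - A t (w t)) (e t) \<le> \<Gamma> * rb t + Lam t * \<phi> t"
        using smo \<psi>le \<Lambda>0 by (simp add: e_def \<phi>_def Lam_def)
      finally have pf: "pform p (Dt t) (e t) \<le> N powr (p - 1) * norm (Req t) + (\<Gamma> * rb t + Lam t * \<phi> t)"
        by simp
      have yg: "p * (N powr (p - 1) * norm (Req t)) \<le> r t + (p - 1) * \<phi> t"
        using young_p[OF p, of N "norm (Req t)"] N by (simp add: r_def \<phi>_def N_def)
      have "\<phi>' t \<le> p * (N powr (p - 1) * norm (Req t)) + p * (\<Gamma> * rb t + Lam t * \<phi> t)"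
        using pf p0 unfolding \<phi>'_def by (simp add: distrib_left[symmetric] mult_left_mono)
      also have "\<dots> \<le> r t + (p - 1) * \<phi> t + p * (\<Gamma> * rb t + Lam t * \<phi> t)"
        using yg by simp
      also have "\<dots> = a t * \<phi> t + b t" by (simp add: a_def b_def algebra_simps)
      finally show ?thesis .
    qed
  qed
  have Isets: "I \<in> sets lebesgue" by (simp add: Idef)
  have toHK: "f integrable_on {0..T} \<and> integral {0..T} f = integral\<^sup>L (lebesgue_on I) f"
    if "integrable (lebesgue_on I) f" for f :: "real \<Rightarrow> real"
  proof -
    have "f integrable_on I" by (rule integrable_on_lebesgue_on[OF that Isets])
    moreover have "integral\<^sup>L (lebesgue_on I) f = integral I f"
      by (rule lebesgue_integral_eq_integral[OF that Isets])
    ultimately show ?thesis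
      by (simp add: Idef integrable_on_open_interval_real integral_open_interval_real)
  qed
  have LamL: "integrable (lebesgue_on I) Lam" unfolding Lam_def[abs_def]
    by (rule integrable_abs[OF \<Lambda>_L1])
  have rL: "integrable (lebesgue_on I) r" using Req_Lp unfolding Lp_def r_def[abs_def] by simp
  have \<rho>L: "integrable (lebesgue_on I) (\<lambda>t. \<rho> (Rbn t))"
    and \<rho>h: "integral\<^sup>L (lebesgue_on I) (\<lambda>t. \<bar>\<rho> (Rbn t)\<bar>) \<le> h (Lp_norm p I Rbn)"
    using \<rho>_h[OF Rbn_Lp] by auto
  have rbL: "integrable (lebesgue_on I) rb" unfolding rb_def[abs_def] by (rule integrable_abs[OF \<rho>L])
  have Lam_i: "Lam integrable_on {0..T}" and Lam_int: "integral {0..T} Lam = integral\<^sup>L (lebesgue_on I) Lam"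
    using toHK[OF LamL] by auto
  have r_i: "r integrable_on {0..T}" and r_int: "integral {0..T} r = integral\<^sup>L (lebesgue_on I) r"
    using toHK[OF rL] by auto
  have rb_i: "rb integrable_on {0..T}" and rb_int: "integral {0..T} rb = integral\<^sup>L (lebesgue_on I) rb"
    using toHK[OF rbL] by auto
  have a_i: "a integrable_on {0..T}" unfolding a_def[abs_def]
    by (intro integrable_add integrable_const_ivl) (use integrable_on_cmult_left[OF Lam_i, of p] in simp)
  have b_i: "b integrable_on {0..T}" unfolding b_def[abs_def]
    by (intro integrable_add r_i) (use integrable_on_cmult_left[OF rb_i, of "p * \<Gamma>"] in simp)
  have a\<phi>_i: "(\<lambda>s. a s * \<phi> s) integrable_on {0..T}"
  proof -
    have "(\<lambda>x. \<phi> x * a x) absolutely_integrable_on {0..T}"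
    proof (rule absolutely_integrable_bounded_measurable_product_real)
      show "\<phi> \<in> borel_measurable (lebesgue_on {0..T})"
        by (rule continuous_imp_measurable_on_sets_lebesgue[OF \<phi>cont]) simp
      show "bounded (\<phi> ` {0..T})"
        by (rule compact_imp_bounded[OF compact_continuous_image[OF \<phi>cont]]) simp
      show "a absolutely_integrable_on {0..T}"
        by (rule nonnegative_absolutely_integrable_1[OF a_i a0])
    qed simp
    hence "(\<lambda>x. \<phi> x * a x) integrable_on {0..T}" by (rule set_lebesgue_integral_eq_integral(1))
    thus ?thesis by (simp add: mult.commute)
  qed
  have sub_i: "f integrable_on {c..d}" if "f integrable_on {0..T}" "0 \<le> c" "d \<le> T" for f :: "real \<Rightarrow> real" and c d
    using integrable_on_subinterval[OF that(1)] that by auto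
  have IE: "\<phi> t \<le> \<phi> 0 + integral {0..T} b + integral {0..t} (\<lambda>s. a s * \<phi> s)" if t: "0 \<le> t" "t < T" for t
  proof (cases "t = 0")
    case True
    have "0 \<le> integral {0..T} b" by (rule integral_nonneg[OF b_i b0])
    thus ?thesis using True by simp
  next
    case False
    hence t0: "0 < t" using t by simp
    define c where "c = integral {0..T} b + integral {0..t} (\<lambda>s. a s * \<phi> s)"
    have key: "\<phi> t \<le> \<phi> s + c" if s: "s \<in> {0<..<t}" for s
    proof -
      have s0: "0 \<le> s" "s \<le> t" "t \<le> T" using s t by auto
      have ivl: "{s..t} \<subseteq> I" using s t by (auto simp: Idef)
      have ftc: "(\<phi>' has_integral \<phi> t - \<phi> s) {s..t}"
      proof (rule fundamental_theorem_of_calculus)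
        show "s \<le> t" using s0 by simp
        fix x assume "x \<in> {s..t}"
        hence "x \<in> I" using ivl by blast
        hence "(\<phi> has_real_derivative \<phi>' x) (at x)" by (rule \<phi>d)
        hence "(\<phi> has_vector_derivative \<phi>' x) (at x)" by (simp add: has_real_derivative_iff_has_vector_derivative)
        thus "(\<phi> has_vector_derivative \<phi>' x) (at x within {s..t})" by (rule has_vector_derivative_at_within)
      qed
      have i1: "(\<lambda>x. a x * \<phi> x) integrable_on {s..t}" by (rule sub_i[OF a\<phi>_i s0(1)]) (use s0 in simp)
      have i2: "b integrable_on {s..t}" by (rule sub_i[OF b_i s0(1)]) (use s0 in simp)
      have i3: "(\<lambda>x. a x * \<phi> x) integrable_on {0..t}" by (rule sub_i[OF a\<phi>_i]) (use s0 in simp_all)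
      have g_i: "(\<lambda>x. a x * \<phi> x + b x) integrable_on {s..t}" by (rule integrable_add[OF i1 i2])
      have st1: "\<phi> t - \<phi> s \<le> integral {s..t} (\<lambda>x. a x * \<phi> x + b x)"
      proof (rule has_integral_le[OF ftc integrable_integral[OF g_i]])
        fix x assume "x \<in> {s..t}"
        hence "x \<in> I" using ivl by blast
        thus "\<phi>' x \<le> a x * \<phi> x + b x" by (rule bound)
      qed
      have st2: "integral {s..t} (\<lambda>x. a x * \<phi> x + b x) = integral {s..t} (\<lambda>x. a x * \<phi> x) + integral {s..t} b"
        by (rule integral_add[OF i1 i2])
      have nn: "0 \<le> a x * \<phi> x" for x using a0[of x] \<phi>0[of x] by simp
      have st3: "integral {s..t} (\<lambda>x. a x * \<phi> x) \<le> integral {0..t} (\<lambda>x. a x * \<phi> x)"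
        by (rule integral_subset_le[OF _ i1 i3]) (use s0 nn in auto)
      have st4: "integral {s..t} b \<le> integral {0..T} b"
        by (rule integral_subset_le[OF _ i2 b_i]) (use s0 b0 in auto)
      show ?thesis using st1 st2 st3 st4 unfolding c_def by linarith
    qed
    have lim: "((\<lambda>s. \<phi> s + c) \<longlongrightarrow> \<phi> 0 + c) (at_right 0)"
      using continuous_on_Icc_at_rightD[OF \<phi>cont T] by (intro tendsto_intros)
    have ev: "eventually (\<lambda>s. \<phi> t \<le> \<phi> s + c) (at_right 0)"
      by (rule eventually_at_rightI[OF _ t0]) (rule key)
    have "\<phi> t \<le> \<phi> 0 + c"
      by (rule tendsto_lowerbound[OF lim ev]) simp
    thus ?thesis by (simp add: c_def)
  qed
  define K where "K = \<phi> 0 + integral {0..T} b"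
  have K0: "0 \<le> K" unfolding K_def using integral_nonneg[OF b_i b0] \<phi>0[of 0] by simp
  have gr: "\<phi> t0 \<le> K * exp ((p - 1) * t0 + p * integral {0..T} Lam)" if t0: "t0 \<in> I" for t0
  proof -
    have t0': "0 \<le> t0" "t0 < T" using t0 by (auto simp: Idef)
    have "\<phi> t0 \<le> K * exp (integral {0..t0} a)"
    proof (rule gronwall_int)
      show "continuous_on {0..t0} \<phi>" by (rule continuous_on_subset[OF \<phi>cont]) (use t0' in auto)
      show "a integrable_on {0..t0}" using sub_i[OF a_i, of 0 t0] t0' by simp
      show "(\<lambda>s. a s * \<phi> s) integrable_on {0..t0}" using sub_i[OF a\<phi>_i, of 0 t0] t0' by simp
      fix t assume "t \<in> {0..t0}"
      thus "\<phi> t \<le> K + integral {0..t} (\<lambda>s. a s * \<phi> s)" using IE[of t] t0' by (simp add: K_def)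
    qed (use t0' a0 \<phi>0 K0 in auto)
    also have "integral {0..t0} a = (p - 1) * t0 + p * integral {0..t0} Lam"
    proof -
      have Li: "Lam integrable_on {0..t0}" using sub_i[OF Lam_i, of 0 t0] t0' by simp
      have "(a has_integral (t0 * (p - 1) + p * integral {0..t0} Lam)) {0..t0}"
        unfolding a_def[abs_def]
        using has_integral_add[OF has_integral_const_real[of "p - 1" 0 t0] has_integral_mult_right[OF integrable_integral[OF Li], of p]]
          t0' by simp
      thus ?thesis by (simp add: integral_unique algebra_simps)
    qed
    also have "integral {0..t0} Lam \<le> integral {0..T} Lam"
      using sub_i[OF Lam_i, of 0 t0] Lam_i t0' by (intro integral_subset_le) (auto simp: Lam_def)
    hence "K * exp ((p - 1) * t0 + p * integral {0..t0} Lam) \<le> K * exp ((p - 1) * t0 + p * integral {0..T} Lam)"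
      using K0 p0 by (intro mult_left_mono) auto
    finally show ?thesis .
  qed
  define L where "L = integral\<^sup>L (lebesgue_on I) Lam"
  define C where "C = ETeq + \<beta>eq Req * real Meq powr (- \<alpha>eq) + ETin + \<beta>in Rin * real Min powr (- \<alpha>in)
            + p * \<Gamma> * h ((ETbn + \<beta>bn Rbn * real Mbn powr (- \<alpha>bn)) powr (1 / p))"
  have KC: "K \<le> C"
  proof -
    have e0: "e 0 = Rin" by (simp add: e_def Rindef w_init)
    have in1: "\<phi> 0 \<le> ETin + \<beta>in Rin * real Min powr (- \<alpha>in)"
      using Qin_err[OF train(4,5,6), of Rin] by (simp add: \<phi>_def e0 ETindef abs_le_iff)
    have eq0: "Lp_pow p I Req \<le> ETeq + \<beta>eq Req * real Meq powr (- \<alpha>eq)"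
      using Qeq_err[OF train(1,2,3) Req_Lp] by (simp add: ETeqdef abs_le_iff)
    have eq1: "integral {0..T} r \<le> ETeq + \<beta>eq Req * real Meq powr (- \<alpha>eq)"
      using eq0 r_int by (simp add: Lp_pow_def r_def[abs_def])
    have bn: "Lp_pow p I Rbn \<le> ETbn + \<beta>bn Rbn * real Mbn powr (- \<alpha>bn)"
      using Qbn_err[OF train(7,8,9) Rbn_Lp] by (simp add: ETbndef abs_le_iff)
    have Lpp0: "0 \<le> Lp_pow p I Rbn" unfolding Lp_pow_def by (rule Bochner_Integration.integral_nonneg) simp
    have hm: "h (Lp_norm p I Rbn) \<le> h ((ETbn + \<beta>bn Rbn * real Mbn powr (- \<alpha>bn)) powr (1 / p))"
    proof (rule mono_onD[OF h_mono])
      show "Lp_norm p I Rbn \<in> {0..}" by (simp add: Lp_norm_def)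
      show "(ETbn + \<beta>bn Rbn * real Mbn powr (- \<alpha>bn)) powr (1 / p) \<in> {0..}" by simp
      show "Lp_norm p I Rbn \<le> (ETbn + \<beta>bn Rbn * real Mbn powr (- \<alpha>bn)) powr (1 / p)"
        unfolding Lp_norm_def by (rule powr_mono2) (use p0 Lpp0 bn in auto)
    qed
    have rbI: "integral {0..T} rb \<le> h ((ETbn + \<beta>bn Rbn * real Mbn powr (- \<alpha>bn)) powr (1 / p))"
      using rb_int \<rho>h hm by (simp add: rb_def[abs_def])
    have bI: "integral {0..T} b = integral {0..T} r + p * \<Gamma> * integral {0..T} rb"
    proof -
      have "(b has_integral (integral {0..T} r + p * \<Gamma> * integral {0..T} rb)) {0..T}"
        unfolding b_def[abs_def]
        by (rule has_integral_add[OF integrable_integral[OF r_i] has_integral_mult_right[OF integrable_integral[OF rb_i]]])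
      thus ?thesis by (rule integral_unique)
    qed
    have "p * \<Gamma> * integral {0..T} rb \<le> p * \<Gamma> * h ((ETbn + \<beta>bn Rbn * real Mbn powr (- \<alpha>bn)) powr (1 / p))"
      using rbI p0 \<Gamma>0 by (intro mult_left_mono) auto
    thus ?thesis using in1 eq1 bI unfolding K_def C_def by linarith
  qed
  have C0: "0 \<le> C" using K0 KC by linarith
  define c where "c = q * (p - 1) / p"
  have cpos: "0 < c" using p q by (simp add: c_def)
  define F where "F t = C powr (q / p) * exp (q * L) * exp (c * t)" for t
  have pt: "norm (e t) powr q \<le> F t" if t: "t \<in> I" for t
  proof -
    have "\<phi> t \<le> K * exp ((p - 1) * t + p * L)"
      using gr[OF t] Lam_int by (simp add: L_def)
    also have "\<dots> \<le> C * exp ((p - 1) * t + p * L)"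
      using KC by (intro mult_right_mono) auto
    finally have "\<phi> t powr (q / p) \<le> (C * exp ((p - 1) * t + p * L)) powr (q / p)"
      by (intro powr_mono2) (use p0 q \<phi>0 in auto)
    also have "\<dots> = C powr (q / p) * exp (((p - 1) * t + p * L) * (q / p))"
      using C0 by (simp add: powr_mult exp_powr_real)
    also have "((p - 1) * t + p * L) * (q / p) = q * L + c * t"
      using p0 by (simp add: c_def field_simps)
    finally have A: "\<phi> t powr (q / p) \<le> F t" by (simp add: F_def exp_add algebra_simps)
    have "\<phi> t powr (q / p) = norm (e t) powr q" using p0 by (simp add: \<phi>_def powr_powr)
    thus ?thesis using A by simp
  qed
  define V where "V = C powr (q / p) * exp (q * L) * ((exp (c * T) - 1) / c)"
  have Fint: "(F has_integral V) {0..T}"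
  proof -
    have "((\<lambda>t. exp (c * t) / c) has_vector_derivative exp (c * x)) (at x within {0..T})" for x
    proof -
      have "((\<lambda>t. exp (c * t) / c) has_real_derivative exp (c * x) * c / c) (at x)"
        by (auto intro!: derivative_eq_intros)
      thus ?thesis using cpos by (simp add: has_real_derivative_iff_has_vector_derivative has_vector_derivative_at_within)
    qed
    hence "((\<lambda>t. exp (c * t)) has_integral (exp (c * T) / c - exp (c * 0) / c)) {0..T}"
      using T by (intro fundamental_theorem_of_calculus) auto
    hence "((\<lambda>t. C powr (q / p) * exp (q * L) * exp (c * t)) has_integral
        C powr (q / p) * exp (q * L) * (exp (c * T) / c - exp (c * 0) / c)) {0..T}"
      by (rule has_integral_mult_right)
    thus ?thesis by (simp add: F_def[abs_def] V_def diff_divide_distrib)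
  qed
  have F_i: "F integrable_on I" using Fint by (auto simp: Idef integrable_on_open_interval_real[symmetric] intro: has_integral_integrable)
  have intF: "integral I F = V" using integral_unique[OF Fint] by (simp add: Idef integral_open_interval_real)
  have V0: "0 \<le> V" using cpos T by (simp add: V_def)
  have fin: "\<E> \<le> V"
  proof (cases "integrable (lebesgue_on I) (\<lambda>t. norm (e t) powr q)")
    case True
    have "\<E> = integral I (\<lambda>t. norm (e t) powr q)"
      using lebesgue_integral_eq_integral[OF True Isets] by (simp add: Edef Idef Lp_pow_def e_def)
    also have "\<dots> \<le> integral I F"
      by (rule integral_le[OF integrable_on_lebesgue_on[OF True Isets] F_i]) (rule pt)
    finally show ?thesis using intF by simp
  next
    case False
    hence "\<E> = 0" by (simp add: Edef Idef Lp_pow_def e_def not_integrable_integral_eq)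
    thus ?thesis using V0 by simp
  qed
  have cT: "c * T = q * (p - 1) * T / p" by (simp add: c_def)
  have Veq: "V = C powr (q / p) * (p * (exp (q * (p - 1) * T / p) - 1) / (q * (p - 1))) * exp (q * L)"
    unfolding V_def cT using p q by (simp add: c_def field_simps)
  have Ceq: "C = ETeq + \<beta>eq Req * real Meq powr (- \<alpha>eq) + ETin + \<beta>in Rin * real Min powr (- \<alpha>in)
            + p * (SUP t\<in>{0..T}. \<bar>\<gamma> t (w\<^sub>\<theta> t) (w t)\<bar>)
                * h ((ETbn + \<beta>bn Rbn * real Mbn powr (- \<alpha>bn)) powr (1 / p))"
    by (simp add: C_def \<Gamma>_def)
  have Leq: "L = integral\<^sup>L (lebesgue_on I) (\<lambda>t. \<bar>\<Lambda> t (w\<^sub>\<theta> t) (w t)\<bar>)"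
    by (simp add: L_def Lam_def[abs_def])
  show ?thesis using fin unfolding Veq Ceq Leq .
qed

end
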